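(* Let $n\ge r$, let $\mathbf{A}_1,\dots,\mathbf{A}_K\in\mathbb{R}^{n\times r}$ and $c_1,\dots,c_K\in\mathbb{R}$. Let $\Delta=\{\boldsymbol{\mu}\in\mathbb{R}^K:\mu_k\ge0,\ \sum_k\mu_k=1\}$ and $\mathbf{A}(\boldsymbol{\mu})=\sum_{k=1}^K\mu_k\mathbf{A}_k$. Then $$\max_{\mathbf{U}^T\mathbf{U}\preccurlyeq\mathbf{I}_r}\ \min_{1\le k\le K}\big(2\,\mathrm{Tr}(\mathbf{A}_k^T\mathbf{U})+c_k\big)=\min_{\boldsymbol{\mu}\in\Delta}\Big(2\|\mathbf{A}(\boldsymbol{\mu})\|_*+\sum_{k=1}^K\mu_kc_k\Big).$$ Moreover, if $\boldsymbol{\mu}^*$ is a minimizer of the right-hand side and $\mathbf{A}(\boldsymbol{\mu}^* )$ has full column rank, then $\mathbf{U}^*=\mathbf{A}(\boldsymbol{\mu}^* )\big(\mathbf{A}(\boldsymbol{\mu}^* )^T\mathbf{A}(\boldsymbol{\mu}^* )\big)^{-1/2}$ is a maximizer of the left-hand side, and $(\mathbf{U}^* )^T\mathbf{U}^*=\mathbf{I}_r$.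
   Context: $\|\cdot\|_*$ denotes the nuclear norm (sum of singular values). $\mathbf{A}\preccurlyeq\mathbf{B}$ means $\mathbf{B}-\mathbf{A}$ is positive semidefinite. In the FPCA algorithm, $\mathbf{A}_k=\mathbf{R}_k\mathbf{U}^t$ and $c_k=-\mathrm{Tr}((\mathbf{U}^t)^T\mathbf{R}_k\mathbf{U}^t)$ for the current iterate $\mathbf{U}^t$. *)

theory Defs
  imports "HOL-Analysis.Analysis"
begin

definition psd :: "real^'n^'n \<Rightarrow> bool" where
  "psd S \<longleftrightarrow> transpose S = S \<and> (\<forall>x. 0 \<le> x \<bullet> (S *v x))"

definition loewner_le :: "real^'n^'n \<Rightarrow> real^'n^'n \<Rightarrow> bool" where
  "loewner_le A B \<longleftrightarrow> psd (B - A)"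

definition psd_sqrt :: "real^'n^'n \<Rightarrow> real^'n^'n" where
  "psd_sqrt X = (THE S. psd S \<and> S ** S = X)"

(* Nuclear norm ||M||_* = sum of singular values = Tr((M^T M)^(1/2)). *)
definition nuclear_norm :: "real^'r^'n \<Rightarrow> real" where
  "nuclear_norm M = trace (psd_sqrt (transpose M ** M))"

end

theory Submission
  imports Defs
begin

lemma sym_inner: fixes X :: "real^'n^'n" assumes "transpose X = X" shows "x \<bullet> (X *v y) = (X *v x) \<bullet> y"
proof -
  have "x \<bullet> (X *v y) = (x v* X) \<bullet> y" by (rule dot_lmul_matrix[symmetric])
  also have "x v* X = X *v x" using vector_transpose_matrix[of x X] assms by simp
  finally show ?thesis .
qed

lemma sym_inner': fixes X :: "real^'n^'n" shows "transpose X = X \<Longrightarrow> x \<bullet> (X *v y) = y \<bullet> (X *v x)"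
  using sym_inner[of X x y] by (simp add: inner_commute)

lemma quad_zero:
  fixes a C :: real
  assumes "\<And>t. 0 \<le> 2*t*a + t^2*C"
  shows "a = 0"
proof (rule ccontr)
  assume "a \<noteq> 0"
  define k where "k = \<bar>C\<bar> + 1"
  have k: "k > 0" "\<bar>C\<bar> \<le> k" unfolding k_def by auto
  define t where "t = - a / k"
  have h0: "0 \<le> 2*t*a + t^2*C" by (rule assms)
  have h1: "2*t*a = -2*(a^2/k)" unfolding t_def by (simp add: power2_eq_square)
  have h2: "t^2*C = (a^2/k^2)*C" unfolding t_def by (simp add: power_divide)
  have p: "a^2/k^2 > 0" using \<open>a \<noteq> 0\<close> k by simp
  have "(a^2/k^2)*C \<le> (a^2/k^2)*k"
    by (rule mult_left_mono) (use k p in auto)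
  also have "(a^2/k^2)*k = a^2/k" using k by (simp add: power2_eq_square)
  finally have h3: "t^2*C \<le> a^2/k" using h2 by simp
  have "a^2/k > 0" using \<open>a \<noteq> 0\<close> k by simp
  then show False using h0 h1 h3 by linarith
qed

lemma eig_sub:
  fixes X :: "real^'n^'n"
  assumes sym: "transpose X = X" and sV: "subspace V" and ne: "V \<noteq> {0}"
    and inv: "\<forall>x\<in>V. X *v x \<in> V"
  shows "\<exists>x\<in>V. norm x = 1 \<and> X *v x = (x \<bullet> (X *v x)) *\<^sub>R x"
proof -
  define q where "q = (\<lambda>x. x \<bullet> (X *v x))"
  define K where "K = V \<inter> sphere 0 1"
  have "compact K" unfolding K_def
    by (simp add: closed_Int_compact closed_subspace sV)
  obtain v where v: "v \<in> V" "v \<noteq> 0" using ne sV subspace_0 by blast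
  have "v /\<^sub>R norm v \<in> K" unfolding K_def using v sV
    by (simp add: subspace_scale)
  hence "K \<noteq> {}" by blast
  have "continuous_on K q" unfolding q_def
    by (intro continuous_intros linear_continuous_on matrix_vector_mul_bounded_linear)
  then obtain x where xK: "x \<in> K" and xmax: "\<forall>y\<in>K. q y \<le> q x"
    using continuous_attains_sup[OF \<open>compact K\<close> \<open>K \<noteq> {}\<close>] by blast
  have xV: "x \<in> V" and nx: "norm x = 1" using xK unfolding K_def by auto
  have xx: "x \<bullet> x = 1" using nx by (simp add: dot_square_norm)
  define lam where "lam = q x"
  have c1: "q z \<le> lam * (z \<bullet> z)" if "z \<in> V" for z
  proof (cases "z = 0")
    case True then show ?thesis by (simp add: q_def)
  next
    case False
    have "z /\<^sub>R norm z \<in> K" unfolding K_def using that False sV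
      by (simp add: subspace_scale)
    hence "q (z /\<^sub>R norm z) \<le> lam" using xmax lam_def by blast
    moreover have "q (z /\<^sub>R norm z) = q z / (norm z)^2"
      by (simp add: q_def matrix_vector_mult_scaleR power2_eq_square field_simps)
    moreover have "(norm z)^2 > 0" using False by simp
    ultimately have "q z \<le> lam * (norm z)^2" by (simp add: divide_le_eq)
    then show ?thesis by (simp add: dot_square_norm)
  qed
  have c2: "y \<bullet> (X *v x) = 0" if "y \<in> V" "y \<bullet> x = 0" for y
  proof -
    let ?a = "y \<bullet> (X *v x)"
    have "0 \<le> 2*t*(-?a) + t^2*(lam * (y \<bullet> y) - q y)" for t
    proof -
      have "x + t *\<^sub>R y \<in> V" using xV that sV by (simp add: subspace_add subspace_scale)
      from c1[OF this]
      have "q (x + t *\<^sub>R y) \<le> lam * ((x + t *\<^sub>R y) \<bullet> (x + t *\<^sub>R y))" .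
      moreover have "q (x + t *\<^sub>R y) = lam + 2*t*?a + t^2 * q y"
        unfolding q_def lam_def
        by (simp add: matrix_vector_right_distrib matrix_vector_mult_scaleR inner_add_left
            inner_add_right sym_inner'[OF sym, of x y] power2_eq_square algebra_simps)
      moreover have "(x + t *\<^sub>R y) \<bullet> (x + t *\<^sub>R y) = 1 + t^2 * (y \<bullet> y)"
        using xx that(2) by (simp add: inner_add_left inner_add_right inner_commute power2_eq_square)
      ultimately have "lam + 2*t*?a + t^2 * q y \<le> lam * (1 + t^2*(y \<bullet> y))" by simp
      thus ?thesis by (simp add: algebra_simps)
    qed
    from quad_zero[OF this] show ?thesis by simp
  qed
  define w where "w = X *v x - lam *\<^sub>R x"
  have wV: "w \<in> V" unfolding w_def using inv xV sV by (simp add: subspace_diff subspace_scale)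
  have wx: "w \<bullet> x = 0" unfolding w_def lam_def q_def using xx
    by (simp add: inner_diff_left inner_commute inner_diff_right)
  have "w \<bullet> (X *v x) = 0" using c2[OF wV wx] .
  hence "w \<bullet> w = 0" using wx unfolding w_def by (simp add: inner_diff_right)
  hence "w = 0" by simp
  thus ?thesis using xV nx unfolding w_def lam_def q_def by auto
qed

lemma spec_sub:
  fixes X :: "real^'n^'n"
  assumes sym: "transpose X = X"
  shows "subspace V \<Longrightarrow> (\<forall>x\<in>V. X *v x \<in> V) \<Longrightarrow> \<exists>B. finite B \<and> B \<subseteq> V \<and> (\<forall>b\<in>B. b \<bullet> b = 1)
     \<and> (\<forall>b\<in>B. \<forall>c\<in>B. b \<noteq> c \<longrightarrow> b \<bullet> c = 0) \<and> (\<forall>b\<in>B. X *v b = (b \<bullet> (X *v b)) *\<^sub>R b) \<and> V \<subseteq> span B"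
proof (induction "dim V" arbitrary: V rule: less_induct)
  case less
  show ?case
  proof (cases "V = {0}")
    case True then show ?thesis by (intro exI[of _ "{}"]) auto
  next
    case False
    obtain x where xV: "x \<in> V" and nx: "norm x = 1" and ex: "X *v x = (x \<bullet> (X *v x)) *\<^sub>R x"
      using eig_sub[OF sym less.prems(1) False less.prems(2)] by blast
    have xx: "x \<bullet> x = 1" using nx by (simp add: dot_square_norm)
    define W where "W = V \<inter> {y. x \<bullet> y = 0}"
    have sW: "subspace W" unfolding W_def by (intro subspace_inter less.prems(1) subspace_hyperplane)
    have iW: "\<forall>y\<in>W. X *v y \<in> W"
    proof
      fix y assume y: "y \<in> W"
      have "x \<bullet> (X *v y) = (X *v x) \<bullet> y" by (rule sym_inner[OF sym])
      also have "\<dots> = 0" using y unfolding W_def by (subst ex) simp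
      finally show "X *v y \<in> W" using y less.prems(2) unfolding W_def by auto
    qed
    have "x \<notin> W" using xx unfolding W_def by auto
    hence WV: "W \<subset> V" using xV unfolding W_def by blast
    have "dim W < dim V"
      by (rule dim_psubset) (use WV sW less.prems(1) in \<open>simp add: span_eq_iff[THEN iffD2]\<close>)
    from less.hyps[OF this sW iW] obtain B' where B': "finite B'" "B' \<subseteq> W" "\<forall>b\<in>B'. b \<bullet> b = 1"
      "\<forall>b\<in>B'. \<forall>c\<in>B'. b \<noteq> c \<longrightarrow> b \<bullet> c = 0" "\<forall>b\<in>B'. X *v b = (b \<bullet> (X *v b)) *\<^sub>R b" "W \<subseteq> span B'"
      by blast
    have orth: "\<forall>b\<in>B'. x \<bullet> b = 0 \<and> b \<bullet> x = 0" using B'(2) unfolding W_def by (auto simp: inner_commute)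
    have sp: "V \<subseteq> span (insert x B')"
    proof
      fix v assume v: "v \<in> V"
      have "v - (x \<bullet> v) *\<^sub>R x \<in> W" unfolding W_def using v xV xx less.prems(1)
        by (simp add: subspace_diff subspace_scale inner_diff_right)
      hence "v - (x \<bullet> v) *\<^sub>R x \<in> span B'" using B'(6) by blast
      thus "v \<in> span (insert x B')" unfolding span_breakdown_eq by blast
    qed
    show ?thesis
      apply (rule exI[of _ "insert x B'"])
      using B' xV xx ex orth sp WV by auto
  qed
qed

definition onb :: "(real^'n) set \<Rightarrow> bool" where
  "onb B \<longleftrightarrow> finite B \<and> (\<forall>b\<in>B. b \<bullet> b = 1) \<and> (\<forall>b\<in>B. \<forall>c\<in>B. b \<noteq> c \<longrightarrow> b \<bullet> c = 0) \<and> span B = UNIV"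

lemma spectral:
  fixes X :: "real^'n^'n"
  assumes "transpose X = X"
  shows "\<exists>B. onb B \<and> (\<forall>b\<in>B. X *v b = (b \<bullet> (X *v b)) *\<^sub>R b)"
  using spec_sub[OF assms, of UNIV] unfolding onb_def by auto

lemma onb_coef:
  assumes "onb B" "c \<in> B"
  shows "c \<bullet> (\<Sum>b\<in>B. f b *\<^sub>R b) = f c"
proof -
  have fin: "finite B" using assms(1) unfolding onb_def by auto
  have "c \<bullet> (\<Sum>b\<in>B. f b *\<^sub>R b) = (\<Sum>b\<in>B. f b * (c \<bullet> b))"
    by (simp add: inner_sum_right)
  also have "\<dots> = f c * (c \<bullet> c) + (\<Sum>b\<in>B-{c}. f b * (c \<bullet> b))"
    by (rule sum.remove[OF fin assms(2)])
  also have "(\<Sum>b\<in>B-{c}. f b * (c \<bullet> b)) = 0"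
    using assms unfolding onb_def by (intro sum.neutral) auto
  finally show ?thesis using assms unfolding onb_def by auto
qed

lemma onb_expand:
  assumes "onb B"
  shows "y = (\<Sum>b\<in>B. (b \<bullet> y) *\<^sub>R b)"
proof -
  have fin: "finite B" and sp: "span B = UNIV" using assms unfolding onb_def by auto
  have "y \<in> span B" using sp by simp
  then obtain u where u: "y = (\<Sum>v\<in>B. u v *\<^sub>R v)" using span_finite[OF fin] by auto
  have "\<forall>b\<in>B. b \<bullet> y = u b" using onb_coef[OF assms] u by simp
  hence "(\<Sum>b\<in>B. (b \<bullet> y) *\<^sub>R b) = (\<Sum>v\<in>B. u v *\<^sub>R v)" by (intro sum.cong) auto
  thus ?thesis using u by simp
qed

lemma onb_inner:
  assumes "onb B"
  shows "y \<bullet> z = (\<Sum>b\<in>B. (b \<bullet> y) * (b \<bullet> z))"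
proof -
  have "y \<bullet> z = y \<bullet> (\<Sum>b\<in>B. (b \<bullet> z) *\<^sub>R b)" using onb_expand[OF assms, of z] by simp
  also have "\<dots> = (\<Sum>b\<in>B. (b \<bullet> y) * (b \<bullet> z))"
    by (simp add: inner_sum_right inner_commute mult.commute)
  finally show ?thesis .
qed

lemma onb_mat_eq:
  fixes U V :: "real^'n^'m"
  assumes "onb B" "\<forall>b\<in>B. U *v b = V *v b"
  shows "U = V"
proof -
  have "U *v y = V *v y" for y
  proof -
    have "U *v y = U *v (\<Sum>b\<in>B. (b \<bullet> y) *\<^sub>R b)" using onb_expand[OF assms(1), of y] by simp
    also have "\<dots> = (\<Sum>b\<in>B. (b \<bullet> y) *\<^sub>R (U *v b))" by (simp add: vec.sum matrix_vector_mult_scaleR)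
    also have "\<dots> = (\<Sum>b\<in>B. (b \<bullet> y) *\<^sub>R (V *v b))" using assms(2) by simp
    also have "\<dots> = V *v (\<Sum>b\<in>B. (b \<bullet> y) *\<^sub>R b)" by (simp add: vec.sum matrix_vector_mult_scaleR)
    also have "\<dots> = V *v y" using onb_expand[OF assms(1), of y] by simp
    finally show ?thesis .
  qed
  thus ?thesis by (simp add: matrix_eq)
qed

lemma onb_delta:
  assumes "onb B"
  shows "(\<Sum>b\<in>B. b$i * b$j) = (if i = j then 1 else 0)"
proof -
  have "axis i (1::real) \<bullet> axis j 1 = (\<Sum>b\<in>B. (b \<bullet> axis i 1) * (b \<bullet> axis j 1))"
    by (rule onb_inner[OF assms])
  moreover have "axis i (1::real) \<bullet> axis j 1 = (if i = j then 1 else 0)" by (simp add: inner_axis_axis)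
  moreover have "\<And>b. b \<bullet> axis i (1::real) = b$i" "\<And>b. b \<bullet> axis j (1::real) = b$j" by (simp_all add: inner_axis)
  ultimately show ?thesis by simp
qed

lemma onb_trace:
  fixes T :: "real^'n^'n"
  assumes "onb B"
  shows "trace T = (\<Sum>b\<in>B. b \<bullet> (T *v b))"
proof -
  have "(\<Sum>b\<in>B. b \<bullet> (T *v b)) = (\<Sum>b\<in>B. \<Sum>i\<in>UNIV. \<Sum>j\<in>UNIV. T$i$j * (b$i * b$j))"
    by (simp add: inner_vec_def matrix_vector_mult_def sum_distrib_left algebra_simps)
  also have "\<dots> = (\<Sum>i\<in>UNIV. \<Sum>j\<in>UNIV. T$i$j * (\<Sum>b\<in>B. b$i * b$j))"
    by (subst sum.swap) (simp add: sum_distrib_left sum.swap[of _ B])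
  also have "\<dots> = (\<Sum>i\<in>UNIV. T$i$i)"
    by (simp add: onb_delta[OF assms] if_distrib cong: if_cong)
  finally show ?thesis by (simp add: trace_def)
qed

lemma psd_zero:
  fixes R :: "real^'n^'n"
  assumes "psd R" "x \<bullet> (R *v x) = 0"
  shows "R *v x = 0"
proof -
  have sym: "transpose R = R" and pos: "\<And>z. 0 \<le> z \<bullet> (R *v z)" using assms(1) unfolding psd_def by auto
  have "y \<bullet> (R *v x) = 0" for y
  proof -
    have "0 \<le> 2*t*(y \<bullet> (R *v x)) + t^2*(y \<bullet> (R *v y))" for t
    proof -
      have "0 \<le> (x + t *\<^sub>R y) \<bullet> (R *v (x + t *\<^sub>R y))" by (rule pos)
      also have "\<dots> = x \<bullet> (R *v x) + 2*t*(y \<bullet> (R *v x)) + t^2*(y \<bullet> (R *v y))"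
        by (simp add: matrix_vector_right_distrib matrix_vector_mult_scaleR inner_add_left
            inner_add_right sym_inner'[OF sym, of x y] power2_eq_square algebra_simps)
      finally show ?thesis using assms(2) by simp
    qed
    from quad_zero[OF this] show ?thesis .
  qed
  from this[of "R *v x"] show ?thesis by simp
qed

definition mk :: "(real^'n) set \<Rightarrow> (real^'n \<Rightarrow> real) \<Rightarrow> real^'n^'n" where
  "mk B h = (\<chi> i j. \<Sum>b\<in>B. h b * (b$i * b$j))"

definition gen :: "(real^'r) set \<Rightarrow> (real^'r \<Rightarrow> real^'n) \<Rightarrow> real^'r^'n" where
  "gen B u = (\<chi> i j. \<Sum>b\<in>B. (u b)$i * b$j)"

lemma gen_mult: "gen B u *v y = (\<Sum>b\<in>B. (b \<bullet> y) *\<^sub>R u b)"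
  by (simp add: vec_eq_iff gen_def matrix_vector_mult_def inner_vec_def sum_component
      sum_distrib_left sum_distrib_right algebra_simps sum.swap[of _ B])

lemma onb_delta_sum:
  fixes g :: "real^'n \<Rightarrow> 'b::real_vector"
  assumes "onb B" "c \<in> B"
  shows "(\<Sum>b\<in>B. (b \<bullet> c) *\<^sub>R g b) = g c"
proof -
  have fin: "finite B" using assms(1) unfolding onb_def by auto
  have "(\<Sum>b\<in>B. (b \<bullet> c) *\<^sub>R g b) = (c \<bullet> c) *\<^sub>R g c + (\<Sum>b\<in>B-{c}. (b \<bullet> c) *\<^sub>R g b)"
    by (rule sum.remove[OF fin assms(2)])
  also have "(\<Sum>b\<in>B-{c}. (b \<bullet> c) *\<^sub>R g b) = 0"
  proof -
    have "\<forall>b\<in>B-{c}. (b \<bullet> c) = 0" using assms unfolding onb_def by auto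
    thus ?thesis by simp
  qed
  finally show ?thesis using assms unfolding onb_def by auto
qed

lemma gen_eig: "onb B \<Longrightarrow> c \<in> B \<Longrightarrow> gen B u *v c = u c"
  by (simp add: gen_mult onb_delta_sum)

lemma mk_gen: "mk B h = gen B (\<lambda>b. h b *\<^sub>R b)"
  by (simp add: mk_def gen_def vec_eq_iff algebra_simps)

lemma mk_mult: "mk B h *v y = (\<Sum>b\<in>B. (b \<bullet> y) *\<^sub>R (h b *\<^sub>R b))"
  by (simp add: mk_gen gen_mult)

lemma mk_eig: "onb B \<Longrightarrow> c \<in> B \<Longrightarrow> mk B h *v c = h c *\<^sub>R c"
  by (simp add: mk_gen gen_eig)

lemma mk_sym: "transpose (mk B h) = mk B h"
  by (simp add: mk_def transpose_def vec_eq_iff mult.commute)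

lemma mk_psd:
  assumes "\<forall>b\<in>B. 0 \<le> h b"
  shows "psd (mk B h)"
  unfolding psd_def
proof (intro conjI allI mk_sym)
  fix x :: "real^'a"
  have "x \<bullet> (mk B h *v x) = (\<Sum>b\<in>B. h b * (b \<bullet> x)^2)"
    by (simp add: mk_mult inner_sum_right power2_eq_square inner_commute algebra_simps)
  also have "\<dots> \<ge> 0" using assms by (intro sum_nonneg) auto
  finally show "0 \<le> x \<bullet> (mk B h *v x)" .
qed

lemma sqrt_unique:
  fixes R R' :: "real^'n^'n"
  assumes "psd R" "psd R'" "R ** R = R' ** R'"
  shows "R = R'"
proof -
  define D where "D = R - R'"
  have sR: "transpose R = R" and sR': "transpose R' = R'" using assms unfolding psd_def by auto
  have sD: "transpose D = D" unfolding D_def using sR sR'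
    by (simp add: transpose_def vec_eq_iff)
  obtain B where B: "onb B" and eB: "\<forall>b\<in>B. D *v b = (b \<bullet> (D *v b)) *\<^sub>R b"
    using spectral[OF sD] by blast
  have "R *v b = R' *v b" if b: "b \<in> B" for b
  proof -
    define d where "d = b \<bullet> (D *v b)"
    have Db: "D *v b = d *\<^sub>R b" using eB b d_def by simp
    have "R *v (R *v b) - R' *v (R' *v b) = R *v (D *v b) + D *v (R' *v b)"
      unfolding D_def by (simp add: matrix_vector_mult_diff_rdistrib matrix_vector_mult_diff_distrib)
    moreover have "R *v (R *v b) - R' *v (R' *v b) = 0"
      using assms(3) by (simp add: matrix_vector_mul_assoc)
    ultimately have e: "R *v (D *v b) + D *v (R' *v b) = 0" by simp
    have "0 = b \<bullet> (R *v (D *v b) + D *v (R' *v b))" by (simp only: e inner_zero_right)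
    also have "\<dots> = b \<bullet> (R *v (D *v b)) + b \<bullet> (D *v (R' *v b))" by (rule inner_add_right)
    also have "b \<bullet> (D *v (R' *v b)) = (D *v b) \<bullet> (R' *v b)" by (rule sym_inner[OF sD])
    finally have "d * (b \<bullet> (R *v b) + b \<bullet> (R' *v b)) = 0"
      using Db by (simp add: matrix_vector_mult_scaleR algebra_simps inner_commute sym_inner'[OF sR'])
    hence "d = 0 \<or> b \<bullet> (R *v b) + b \<bullet> (R' *v b) = 0" by simp
    thus ?thesis
    proof
      assume "d = 0" thus ?thesis using Db unfolding D_def by (simp add: matrix_vector_mult_diff_rdistrib)
    next
      assume h: "b \<bullet> (R *v b) + b \<bullet> (R' *v b) = 0"
      have "0 \<le> b \<bullet> (R *v b)" "0 \<le> b \<bullet> (R' *v b)" using assms unfolding psd_def by auto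
      hence "b \<bullet> (R *v b) = 0" "b \<bullet> (R' *v b) = 0" using h by linarith+
      thus ?thesis using psd_zero assms by metis
    qed
  qed
  thus ?thesis using onb_mat_eq[OF B] by blast
qed

lemma psd_eigen_nonneg: "psd X \<Longrightarrow> 0 \<le> b \<bullet> (X *v b)"
  unfolding psd_def by auto

lemma psd_sqrt_mk:
  fixes X :: "real^'n^'n"
  assumes "psd X" "onb B" "\<forall>b\<in>B. X *v b = (b \<bullet> (X *v b)) *\<^sub>R b"
  shows "psd_sqrt X = mk B (\<lambda>b. sqrt (b \<bullet> (X *v b)))"
proof -
  define R where "R = mk B (\<lambda>b. sqrt (b \<bullet> (X *v b)))"
  have pR: "psd R" unfolding R_def by (rule mk_psd) (simp add: psd_eigen_nonneg[OF assms(1)])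
  have RR: "R ** R = X"
  proof -
    have "\<forall>b\<in>B. (R ** R) *v b = X *v b"
    proof
      fix b assume b: "b \<in> B"
      have "(R ** R) *v b = R *v (R *v b)" by (simp add: matrix_vector_mul_assoc)
      also have "\<dots> = (sqrt (b \<bullet> (X *v b)) * sqrt (b \<bullet> (X *v b))) *\<^sub>R b"
        unfolding R_def using b assms(2) by (simp add: mk_eig matrix_vector_mult_scaleR)
      also have "\<dots> = X *v b" using assms(3) b psd_eigen_nonneg[OF assms(1)] by simp
      finally show "(R ** R) *v b = X *v b" .
    qed
    thus ?thesis using onb_mat_eq[OF assms(2)] by blast
  qed
  have "psd_sqrt X = R" unfolding psd_sqrt_def
  proof (rule the_equality)
    show "psd R \<and> R ** R = X" using pR RR by simp
    fix S assume "psd S \<and> S ** S = X"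
    thus "S = R" using sqrt_unique[of S R] pR RR by simp
  qed
  thus ?thesis unfolding R_def .
qed

lemma transp_inner:
  fixes A :: "real^'r^'n"
  shows "x \<bullet> (transpose A *v z) = (A *v x) \<bullet> z"
proof -
  have "x \<bullet> (transpose A *v z) = (x v* transpose A) \<bullet> z" by (rule dot_lmul_matrix[symmetric])
  also have "x v* transpose A = A *v x" by (rule vector_transpose_matrix)
  finally show ?thesis .
qed

lemma transp_inner':
  fixes A :: "real^'r^'n"
  shows "x \<bullet> (z v* A) = (A *v x) \<bullet> z"
  using transp_inner[of x A z] by simp

lemma gram_sym: fixes M :: "real^'r^'n" shows "transpose (transpose M ** M) = transpose M ** M"
  by (simp add: matrix_transpose_mul)

lemma gram_psd: fixes M :: "real^'r^'n" shows "psd (transpose M ** M)"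
  unfolding psd_def
proof (intro conjI allI gram_sym)
  fix y :: "real^'r"
  have "y \<bullet> ((transpose M ** M) *v y) = (M *v y) \<bullet> (M *v y)"
    by (simp add: matrix_vector_mul_assoc[symmetric] transp_inner transp_inner')
  thus "0 \<le> y \<bullet> ((transpose M ** M) *v y)" by simp
qed

lemma transpose_diff: "transpose (A - B) = transpose A - transpose (B :: real^'n^'m)"
  by (simp add: transpose_def vec_eq_iff)

lemma feas_iff:
  fixes U :: "real^'r^'n"
  shows "loewner_le (transpose U ** U) (mat 1) \<longleftrightarrow> (\<forall>y. norm (U *v y) \<le> norm y)"
proof -
  have t: "transpose (mat 1 - transpose U ** U) = mat 1 - transpose U ** U"
    by (simp add: transpose_diff transpose_mat gram_sym)
  have q: "y \<bullet> ((mat 1 - transpose U ** U) *v y) = y \<bullet> y - (U *v y) \<bullet> (U *v y)" for y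
    by (simp add: matrix_vector_mult_diff_rdistrib inner_diff_right matrix_vector_mul_assoc[symmetric] transp_inner transp_inner')
  have n: "norm (U *v y) \<le> norm y \<longleftrightarrow> (U *v y) \<bullet> (U *v y) \<le> y \<bullet> y" for y
    by (simp add: norm_le)
  show ?thesis unfolding loewner_le_def psd_def using t q n by auto
qed

lemma orth_sum_inner:
  fixes u :: "'a \<Rightarrow> 'b::real_inner"
  assumes "finite B" "\<forall>b\<in>B. \<forall>c\<in>B. b \<noteq> c \<longrightarrow> u b \<bullet> u c = 0"
  shows "(\<Sum>b\<in>B. a b *\<^sub>R u b) \<bullet> (\<Sum>b\<in>B. a b *\<^sub>R u b) = (\<Sum>b\<in>B. (a b)^2 * (u b \<bullet> u b))"
proof -
  have d: "u c \<bullet> (\<Sum>b\<in>B. a b *\<^sub>R u b) = a c * (u c \<bullet> u c)" if c: "c \<in> B" for c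
  proof -
    have "u c \<bullet> (\<Sum>b\<in>B. a b *\<^sub>R u b) = (\<Sum>b\<in>B. a b * (u c \<bullet> u b))"
      by (simp add: inner_sum_right)
    also have "\<dots> = a c * (u c \<bullet> u c) + (\<Sum>b\<in>B-{c}. a b * (u c \<bullet> u b))"
      by (rule sum.remove[OF assms(1) c])
    also have "(\<Sum>b\<in>B-{c}. a b * (u c \<bullet> u b)) = 0"
    proof -
      have "\<forall>b\<in>B-{c}. u c \<bullet> u b = 0" using assms(2) c by auto
      thus ?thesis by simp
    qed
    finally show ?thesis by simp
  qed
  have "(\<Sum>b\<in>B. a b *\<^sub>R u b) \<bullet> (\<Sum>b\<in>B. a b *\<^sub>R u b) = (\<Sum>c\<in>B. a c * (u c \<bullet> (\<Sum>b\<in>B. a b *\<^sub>R u b)))"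
    by (simp add: inner_sum_left)
  also have "\<dots> = (\<Sum>c\<in>B. (a c)^2 * (u c \<bullet> u c))"
    by (intro sum.cong refl) (simp add: d power2_eq_square)
  finally show ?thesis .
qed

lemma trace_tr:
  fixes M U :: "real^'r^'n"
  assumes "onb B"
  shows "trace (transpose M ** U) = (\<Sum>b\<in>B. (M *v b) \<bullet> (U *v b))"
  by (simp add: onb_trace[OF assms] matrix_vector_mul_assoc[symmetric] transp_inner transp_inner')

lemma onb_norm: "onb B \<Longrightarrow> b \<in> B \<Longrightarrow> norm b = 1"
  unfolding onb_def by (simp add: norm_eq_sqrt_inner)

lemma Mb_orth:
  fixes M :: "real^'r^'n"
  assumes B: "onb B" and eB: "\<forall>b\<in>B. (transpose M ** M) *v b = ((M *v b) \<bullet> (M *v b)) *\<^sub>R b"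
    and "b \<in> B" "c \<in> B" "b \<noteq> c"
  shows "(M *v b) \<bullet> (M *v c) = 0"
proof -
  have "(M *v b) \<bullet> (M *v c) = b \<bullet> ((transpose M ** M) *v c)"
    by (simp add: matrix_vector_mul_assoc[symmetric] transp_inner transp_inner')
  also have "\<dots> = 0" using eB assms(3-5) B unfolding onb_def by simp
  finally show ?thesis .
qed

lemma nuc_formula:
  fixes M :: "real^'r^'n"
  assumes B: "onb B" and eB: "\<forall>b\<in>B. (transpose M ** M) *v b = ((M *v b) \<bullet> (M *v b)) *\<^sub>R b"
  shows "psd_sqrt (transpose M ** M) = mk B (\<lambda>b. norm (M *v b))"
    and "nuclear_norm M = (\<Sum>b\<in>B. norm (M *v b))"
proof -
  have e: "\<forall>b\<in>B. b \<bullet> ((transpose M ** M) *v b) = (M *v b) \<bullet> (M *v b)"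
    by (simp add: matrix_vector_mul_assoc[symmetric] transp_inner transp_inner')
  have eB': "\<forall>b\<in>B. (transpose M ** M) *v b = (b \<bullet> ((transpose M ** M) *v b)) *\<^sub>R b"
    using eB e by simp
  have "psd_sqrt (transpose M ** M) = mk B (\<lambda>b. sqrt (b \<bullet> ((transpose M ** M) *v b)))"
    by (rule psd_sqrt_mk[OF gram_psd B eB'])
  also have "\<dots> = mk B (\<lambda>b. norm (M *v b))"
    unfolding mk_def using e by (simp add: norm_eq_sqrt_inner)
  finally show s: "psd_sqrt (transpose M ** M) = mk B (\<lambda>b. norm (M *v b))" .
  have "nuclear_norm M = (\<Sum>b\<in>B. b \<bullet> (mk B (\<lambda>b. norm (M *v b)) *v b))"
    unfolding nuclear_norm_def s by (rule onb_trace[OF B])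
  also have "\<dots> = (\<Sum>b\<in>B. norm (M *v b))"
    using B by (intro sum.cong refl) (simp add: mk_eig onb_def)
  finally show "nuclear_norm M = (\<Sum>b\<in>B. norm (M *v b))" .
qed

lemma nuc_bound:
  fixes M U :: "real^'r^'n"
  assumes B: "onb B" and eB: "\<forall>b\<in>B. (transpose M ** M) *v b = ((M *v b) \<bullet> (M *v b)) *\<^sub>R b"
    and U: "\<forall>y. norm (U *v y) \<le> norm y"
  shows "trace (transpose M ** U) \<le> nuclear_norm M"
proof -
  have "trace (transpose M ** U) = (\<Sum>b\<in>B. (M *v b) \<bullet> (U *v b))" by (rule trace_tr[OF B])
  also have "\<dots> \<le> (\<Sum>b\<in>B. norm (M *v b))"
  proof (rule sum_mono)
    fix b assume b: "b \<in> B"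
    have "(M *v b) \<bullet> (U *v b) \<le> norm (M *v b) * norm (U *v b)" by (rule norm_cauchy_schwarz)
    also have "\<dots> \<le> norm (M *v b) * 1"
      using U[rule_format, of b] onb_norm[OF B b] by (intro mult_left_mono) auto
    finally show "(M *v b) \<bullet> (U *v b) \<le> norm (M *v b)" by simp
  qed
  also have "\<dots> = nuclear_norm M" using nuc_formula[OF B eB] by simp
  finally show ?thesis .
qed

definition ufun :: "real^'r^'n \<Rightarrow> real^'r \<Rightarrow> real^'n" where
  "ufun M b = (M *v b) /\<^sub>R norm (M *v b)"

lemma ufun_inner:
  fixes M :: "real^'r^'n"
  assumes B: "onb B" and eB: "\<forall>b\<in>B. (transpose M ** M) *v b = ((M *v b) \<bullet> (M *v b)) *\<^sub>R b"
    and "b \<in> B" "c \<in> B"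
  shows "ufun M b \<bullet> ufun M c = (if b = c then (if M *v b = 0 then 0 else 1) else 0)"
  using Mb_orth[OF B eB assms(3,4)] by (auto simp: ufun_def dot_square_norm power2_eq_square field_simps)

lemma nuc_attain:
  fixes M :: "real^'r^'n"
  assumes B: "onb B" and eB: "\<forall>b\<in>B. (transpose M ** M) *v b = ((M *v b) \<bullet> (M *v b)) *\<^sub>R b"
  shows "\<forall>y. norm (gen B (ufun M) *v y) \<le> norm y"
    and "trace (transpose M ** gen B (ufun M)) = nuclear_norm M"
proof -
  have fin: "finite B" using B unfolding onb_def by auto
  show "\<forall>y. norm (gen B (ufun M) *v y) \<le> norm y"
  proof
    fix y
    have "(gen B (ufun M) *v y) \<bullet> (gen B (ufun M) *v y) = (\<Sum>b\<in>B. (b \<bullet> y)^2 * (ufun M b \<bullet> ufun M b))"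
      unfolding gen_mult by (rule orth_sum_inner[OF fin]) (use ufun_inner[OF B eB] in auto)
    also have "\<dots> \<le> (\<Sum>b\<in>B. (b \<bullet> y)^2)"
      by (intro sum_mono) (simp add: ufun_inner[OF B eB] mult_left_le)
    also have "\<dots> = y \<bullet> y" using onb_inner[OF B, of y y] by (simp add: power2_eq_square)
    finally show "norm (gen B (ufun M) *v y) \<le> norm y" by (simp add: norm_le)
  qed
  have "trace (transpose M ** gen B (ufun M)) = (\<Sum>b\<in>B. (M *v b) \<bullet> ufun M b)"
    using B by (simp add: trace_tr gen_eig)
  also have "\<dots> = (\<Sum>b\<in>B. norm (M *v b))"
    by (intro sum.cong refl) (simp add: ufun_def dot_square_norm power2_eq_square field_simps)
  also have "\<dots> = nuclear_norm M" using nuc_formula[OF B eB] by simp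
  finally show "trace (transpose M ** gen B (ufun M)) = nuclear_norm M" .
qed

lemma matrix_inv_unique:
  fixes S S' :: "real^'n^'n"
  assumes "S ** S' = mat 1" "S' ** S = mat 1"
  shows "matrix_inv S = S'"
  unfolding matrix_inv_def
proof (rule someI2[where a = S'])
  show "S ** S' = mat 1 \<and> S' ** S = mat 1" using assms by simp
  fix T assume T: "S ** T = mat 1 \<and> T ** S = mat 1"
  have "T = T ** (S ** S')" using assms by (simp add: matrix_mul_rid)
  also have "\<dots> = (T ** S) ** S'" by (simp add: matrix_mul_assoc)
  also have "\<dots> = S'" using T by (simp add: matrix_mul_lid)
  finally show "T = S'" .
qed

lemma fullrank_parts:
  fixes M :: "real^'r^'n"
  assumes B: "onb B" and eB: "\<forall>b\<in>B. (transpose M ** M) *v b = ((M *v b) \<bullet> (M *v b)) *\<^sub>R b"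
    and nz: "\<forall>b\<in>B. M *v b \<noteq> 0"
  shows "M ** matrix_inv (psd_sqrt (transpose M ** M)) = gen B (ufun M)"
    and "transpose (gen B (ufun M)) ** gen B (ufun M) = mat 1"
    and "\<And>U. \<forall>y. norm (U *v y) \<le> norm y \<Longrightarrow> trace (transpose M ** U) = nuclear_norm M \<Longrightarrow> U = gen B (ufun M)"
proof -
  define S where "S = mk B (\<lambda>b. norm (M *v b))"
  define S' where "S' = mk B (\<lambda>b. inverse (norm (M *v b)))"
  have SS': "S ** S' = mat 1"
  proof -
    have "\<forall>b\<in>B. (S ** S') *v b = mat 1 *v b"
    proof
      fix b assume b: "b \<in> B"
      have "(S ** S') *v b = S *v (S' *v b)" by (simp add: matrix_vector_mul_assoc)
      also have "\<dots> = b" unfolding S_def S'_def using B b nz by (simp add: mk_eig matrix_vector_mult_scaleR)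
      finally show "(S ** S') *v b = mat 1 *v b" by (simp add: matrix_vector_mul_lid)
    qed
    thus ?thesis using onb_mat_eq[OF B] by blast
  qed
  have S'S: "S' ** S = mat 1"
  proof -
    have "\<forall>b\<in>B. (S' ** S) *v b = mat 1 *v b"
    proof
      fix b assume b: "b \<in> B"
      have "(S' ** S) *v b = S' *v (S *v b)" by (simp add: matrix_vector_mul_assoc)
      also have "\<dots> = b" unfolding S_def S'_def using B b nz by (simp add: mk_eig matrix_vector_mult_scaleR)
      finally show "(S' ** S) *v b = mat 1 *v b" by (simp add: matrix_vector_mul_lid)
    qed
    thus ?thesis using onb_mat_eq[OF B] by blast
  qed
  have "matrix_inv (psd_sqrt (transpose M ** M)) = S'"
    unfolding nuc_formula(1)[OF B eB] S_def[symmetric] by (rule matrix_inv_unique[OF SS' S'S])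
  moreover have "M ** S' = gen B (ufun M)"
  proof -
    have "\<forall>b\<in>B. (M ** S') *v b = gen B (ufun M) *v b"
    proof
      fix b assume b: "b \<in> B"
      have "(M ** S') *v b = M *v (S' *v b)" by (simp add: matrix_vector_mul_assoc)
      also have "\<dots> = ufun M b" unfolding S'_def ufun_def using B b by (simp add: mk_eig matrix_vector_mult_scaleR)
      finally show "(M ** S') *v b = gen B (ufun M) *v b" using B b by (simp add: gen_eig)
    qed
    thus ?thesis using onb_mat_eq[OF B] by blast
  qed
  ultimately show "M ** matrix_inv (psd_sqrt (transpose M ** M)) = gen B (ufun M)" by simp
  define W where "W = gen B (ufun M)"
  have uu: "ufun M c \<bullet> ufun M b = c \<bullet> b" if "b \<in> B" "c \<in> B" for b c
    using ufun_inner[OF B eB that(2,1)] nz B that unfolding onb_def by auto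
  have "\<forall>b\<in>B. (transpose W ** W) *v b = mat 1 *v b"
  proof
    fix b assume b: "b \<in> B"
    define z where "z = transpose W *v ufun M b"
    have "(transpose W ** W) *v b = z" unfolding z_def W_def using B b
      by (simp only: matrix_vector_mul_assoc[symmetric] gen_eig)
    moreover have "z = b"
    proof -
      have cz: "c \<bullet> z = c \<bullet> b" if c: "c \<in> B" for c
      proof -
        have "c \<bullet> z = (W *v c) \<bullet> ufun M b" unfolding z_def by (rule transp_inner)
        also have "\<dots> = ufun M c \<bullet> ufun M b" unfolding W_def using B c by (simp add: gen_eig)
        finally show ?thesis using uu b c by simp
      qed
      have "z = (\<Sum>c\<in>B. (c \<bullet> z) *\<^sub>R c)" by (rule onb_expand[OF B])
      also have "\<dots> = (\<Sum>c\<in>B. (c \<bullet> b) *\<^sub>R c)" using cz by simp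
      also have "\<dots> = b" by (rule onb_expand[OF B, symmetric])
      finally show ?thesis .
    qed
    ultimately show "(transpose W ** W) *v b = mat 1 *v b" by (simp add: matrix_vector_mul_lid)
  qed
  thus "transpose (gen B (ufun M)) ** gen B (ufun M) = mat 1" using onb_mat_eq[OF B] unfolding W_def by blast
  fix U :: "real^'r^'n"
  assume U: "\<forall>y. norm (U *v y) \<le> norm y" and tr: "trace (transpose M ** U) = nuclear_norm M"
  have fin: "finite B" using B unfolding onb_def by auto
  have le: "(M *v b) \<bullet> (U *v b) \<le> norm (M *v b)" if b: "b \<in> B" for b
  proof -
    have "(M *v b) \<bullet> (U *v b) \<le> norm (M *v b) * norm (U *v b)" by (rule norm_cauchy_schwarz)
    also have "\<dots> \<le> norm (M *v b) * 1"
      using U[rule_format, of b] onb_norm[OF B b] by (intro mult_left_mono) auto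
    finally show ?thesis by simp
  qed
  have eq: "(M *v b) \<bullet> (U *v b) = norm (M *v b)" if b: "b \<in> B" for b
  proof (rule ccontr)
    assume "(M *v b) \<bullet> (U *v b) \<noteq> norm (M *v b)"
    hence "(M *v b) \<bullet> (U *v b) < norm (M *v b)" using le[OF b] by simp
    hence "(\<Sum>b\<in>B. (M *v b) \<bullet> (U *v b)) < (\<Sum>b\<in>B. norm (M *v b))"
      using b le by (intro sum_strict_mono_ex1[OF fin]) auto
    thus False using tr trace_tr[OF B, of M U] nuc_formula(2)[OF B eB] by simp
  qed
  have "\<forall>b\<in>B. U *v b = gen B (ufun M) *v b"
  proof
    fix b assume b: "b \<in> B"
    define v where "v = ufun M b"
    define w where "w = U *v b"
    have n0: "norm (M *v b) > 0" using nz b by simp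
    have vw: "v \<bullet> w = 1" unfolding v_def w_def ufun_def using eq[OF b] n0 by simp
    have vv: "v \<bullet> v = 1" unfolding v_def using ufun_inner[OF B eB b b] nz b by simp
    have "norm w \<le> 1" unfolding w_def using U[rule_format, of b] onb_norm[OF B b] by simp
    hence "(norm w)^2 \<le> 1" by (simp add: power_le_one)
    hence ww: "w \<bullet> w \<le> 1" by (simp add: dot_square_norm)
    have "(v - w) \<bullet> (v - w) = v \<bullet> v - 2 * (v \<bullet> w) + w \<bullet> w"
      by (simp add: inner_diff_left inner_diff_right inner_commute)
    hence "(v - w) \<bullet> (v - w) \<le> 0" using vw vv ww by simp
    hence "v - w = 0" by (meson inner_gt_zero_iff not_le)
    thus "U *v b = gen B (ufun M) *v b" using B b unfolding v_def w_def by (simp add: gen_eig)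
  qed
  thus "U = gen B (ufun M)" using onb_mat_eq[OF B] by blast
qed

lemma gram_eig:
  fixes M :: "real^'r^'n"
  shows "\<exists>B. onb B \<and> (\<forall>b\<in>B. (transpose M ** M) *v b = ((M *v b) \<bullet> (M *v b)) *\<^sub>R b)"
proof -
  obtain B where B: "onb B" and e: "\<forall>b\<in>B. (transpose M ** M) *v b = (b \<bullet> ((transpose M ** M) *v b)) *\<^sub>R b"
    using spectral[OF gram_sym[of M]] by blast
  have "\<forall>b\<in>B. b \<bullet> ((transpose M ** M) *v b) = (M *v b) \<bullet> (M *v b)"
    by (simp add: matrix_vector_mul_assoc[symmetric] transp_inner transp_inner')
  thus ?thesis using B e by auto
qed

lemma nuc_bound_gen:
  fixes M U :: "real^'r^'n"
  assumes "\<forall>y. norm (U *v y) \<le> norm y"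
  shows "trace (transpose M ** U) \<le> nuclear_norm M"
  using gram_eig[of M] nuc_bound assms by blast

lemma nuc_attain_gen:
  fixes M :: "real^'r^'n"
  shows "\<exists>U. (\<forall>y. norm (U *v y) \<le> norm y) \<and> trace (transpose M ** U) = nuclear_norm M"
  using gram_eig[of M] nuc_attain by blast

lemma swap3: "(\<Sum>i\<in>I. \<Sum>j\<in>J. \<Sum>k\<in>K. g i j k) = (\<Sum>k\<in>K. \<Sum>i\<in>I. \<Sum>j\<in>J. g i j k)"
proof -
  have "(\<Sum>i\<in>I. \<Sum>j\<in>J. \<Sum>k\<in>K. g i j k) = (\<Sum>i\<in>I. \<Sum>k\<in>K. \<Sum>j\<in>J. g i j k)"
    by (intro sum.cong refl) (rule sum.swap)
  also have "\<dots> = (\<Sum>k\<in>K. \<Sum>i\<in>I. \<Sum>j\<in>J. g i j k)" by (rule sum.swap)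
  finally show ?thesis .
qed

lemma tr_form:
  fixes A U :: "real^'r^'n"
  shows "trace (transpose A ** U) = (\<Sum>i\<in>UNIV. \<Sum>j\<in>UNIV. A$i$j * U$i$j)"
  by (simp add: trace_def matrix_matrix_mult_def transpose_def) (rule sum.swap)

lemma tr_sum_left:
  fixes A :: "'k \<Rightarrow> real^'r^'n"
  shows "trace (transpose (\<Sum>k\<in>K. m k *\<^sub>R A k) ** U) = (\<Sum>k\<in>K. m k * trace (transpose (A k) ** U))"
proof -
  have "trace (transpose (\<Sum>k\<in>K. m k *\<^sub>R A k) ** U) = (\<Sum>i\<in>UNIV. \<Sum>j\<in>UNIV. \<Sum>k\<in>K. m k * (A k$i$j * U$i$j))"
    by (simp add: tr_form sum_component sum_distrib_right mult.assoc)
  also have "\<dots> = (\<Sum>k\<in>K. \<Sum>i\<in>UNIV. \<Sum>j\<in>UNIV. m k * (A k$i$j * U$i$j))" by (rule swap3)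
  also have "\<dots> = (\<Sum>k\<in>K. m k * trace (transpose (A k) ** U))"
    by (simp add: tr_form sum_distrib_left)
  finally show ?thesis .
qed

lemma tr_lin_right:
  fixes A U V :: "real^'r^'n"
  shows "trace (transpose A ** (u *\<^sub>R U + w *\<^sub>R V)) = u * trace (transpose A ** U) + w * trace (transpose A ** V)"
  by (simp add: tr_form sum.distrib sum_distrib_left algebra_simps)

lemma tr_cont:
  fixes A :: "real^'r^'n"
  shows "continuous_on S (\<lambda>U. trace (transpose A ** U))"
proof -
  have "linear (\<lambda>U. trace (transpose A ** U))"
  proof (rule linearI)
    fix U V :: "real^'r^'n" and r :: real
    show "trace (transpose A ** (U + V)) = trace (transpose A ** U) + trace (transpose A ** V)"
      using tr_lin_right[of A 1 U 1 V] by simp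
    show "trace (transpose A ** (r *\<^sub>R U)) = r *\<^sub>R trace (transpose A ** U)"
      using tr_lin_right[of A r U 0 V] by simp
  qed
  thus ?thesis by (intro linear_continuous_on) (simp add: linear_conv_bounded_linear[symmetric])
qed

lemma mv_cont:
  fixes y :: "real^'r"
  shows "continuous_on S (\<lambda>U::real^'r^'n. U *v y)"
proof -
  have "linear (\<lambda>U::real^'r^'n. U *v y)"
    by (rule linearI) (simp_all add: matrix_vector_mult_add_rdistrib scaleR_matrix_vector_assoc)
  thus ?thesis by (intro linear_continuous_on) (simp add: linear_conv_bounded_linear[symmetric])
qed

lemma feas_compact: "compact {U::real^'r^'n. \<forall>y. norm (U *v y) \<le> norm y}"
  unfolding compact_eq_bounded_closed
proof
  show "closed {U::real^'r^'n. \<forall>y. norm (U *v y) \<le> norm y}"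
    by (intro closed_Collect_all closed_Collect_le continuous_on_norm mv_cont continuous_on_const)
  show "bounded {U::real^'r^'n. \<forall>y. norm (U *v y) \<le> norm y}"
    unfolding bounded_iff
  proof (intro exI ballI)
    fix U :: "real^'r^'n" assume U: "U \<in> {U. \<forall>y. norm (U *v y) \<le> norm y}"
    have e: "\<bar>U$i$j\<bar> \<le> 1" for i j
    proof -
      have "U$i$j = (U *v axis j 1)$i" by (simp add: matrix_vector_mult_basis column_def)
      also have "\<bar>\<dots>\<bar> \<le> norm (U *v axis j 1)" by (rule component_le_norm_cart)
      also have "\<dots> \<le> norm (axis j (1::real))"
      proof -
        have Ua: "\<forall>y. norm (U *v y) \<le> norm y" using U by simp
        show ?thesis using Ua by (rule spec)
      qed
      finally show ?thesis by simp
    qed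
    have "norm U \<le> (\<Sum>i\<in>UNIV. norm (U$i))" unfolding norm_vec_def by (rule L2_set_le_sum) simp
    also have "\<dots> \<le> (\<Sum>i\<in>UNIV. \<Sum>j\<in>(UNIV::'r set). \<bar>U$i$j\<bar>)" by (intro sum_mono norm_le_l1_cart)
    also have "\<dots> \<le> (\<Sum>i\<in>(UNIV::'n set). \<Sum>j\<in>(UNIV::'r set). 1)" by (intro sum_mono e)
    finally show "norm U \<le> real (CARD('n) * CARD('r))" by simp
  qed
qed

lemma feas_convex: "convex {U::real^'r^'n. \<forall>y. norm (U *v y) \<le> norm y}"
  unfolding convex_def
proof (intro ballI allI impI, clarify)
  fix U V :: "real^'r^'n" and u w :: real and y
  assume U: "\<forall>y. norm (U *v y) \<le> norm y" and V: "\<forall>y. norm (V *v y) \<le> norm y"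
    and uw: "0 \<le> u" "0 \<le> w" "u + w = 1"
  have "norm ((u *\<^sub>R U + w *\<^sub>R V) *v y) = norm (u *\<^sub>R (U *v y) + w *\<^sub>R (V *v y))"
    by (simp add: matrix_vector_mult_add_rdistrib scaleR_matrix_vector_assoc)
  also have "\<dots> \<le> u * norm (U *v y) + w * norm (V *v y)"
    using uw by (metis (no_types) abs_of_nonneg norm_scaleR norm_triangle_ineq)
  also have "\<dots> \<le> u * norm y + w * norm y"
    using uw U V by (intro add_mono mult_left_mono) auto
  also have "\<dots> = (u + w) * norm y" by (simp add: algebra_simps)
  also have "\<dots> = norm y" using uw by simp
  finally show "norm ((u *\<^sub>R U + w *\<^sub>R V) *v y) \<le> norm y" .
qed

lemma cont_Min:
  fixes g :: "'k \<Rightarrow> 'a::topological_space \<Rightarrow> real"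
  assumes "finite K" "K \<noteq> {}" "\<forall>k\<in>K. continuous_on S (g k)"
  shows "continuous_on S (\<lambda>x. Min ((\<lambda>k. g k x) ` K))"
  using assms
proof (induction K rule: finite_ne_induct)
  case (singleton k) thus ?case by simp
next
  case (insert k K)
  have "continuous_on S (\<lambda>x. min (g k x) (Min ((\<lambda>k. g k x) ` K)))"
    using insert by (intro continuous_on_min) auto
  thus ?case using insert by (simp add: Min_insert)
qed

theorem mainTheorem3:
  fixes A :: "'k::finite \<Rightarrow> real^'r^'n"
    and c :: "'k \<Rightarrow> real"
  assumes "CARD('r) \<le> CARD('n)"
  defines "feas \<equiv> {U :: real^'r^'n. loewner_le (transpose U ** U) (mat 1)}"
    and "f \<equiv> (\<lambda>U :: real^'r^'n. Min (range (\<lambda>k. 2 * trace (transpose (A k) ** U) + c k)))"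
    and "\<Delta> \<equiv> {\<mu> :: real^'k. (\<forall>k. 0 \<le> \<mu> $ k) \<and> (\<Sum>k\<in>UNIV. \<mu> $ k) = 1}"
    and "Amu \<equiv> (\<lambda>\<mu> :: real^'k. \<Sum>k\<in>UNIV. (\<mu> $ k) *\<^sub>R A k)"
    and "g \<equiv> (\<lambda>\<mu> :: real^'k. 2 * nuclear_norm (\<Sum>k\<in>UNIV. (\<mu> $ k) *\<^sub>R A k) + (\<Sum>k\<in>UNIV. \<mu> $ k * c k))"
  shows "(\<exists>U0 \<in> feas. \<exists>\<mu>0 \<in> \<Delta>.
            (\<forall>U \<in> feas. f U \<le> f U0) \<and> (\<forall>\<mu> \<in> \<Delta>. g \<mu>0 \<le> g \<mu>) \<and> f U0 = g \<mu>0)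
       \<and> (\<forall>\<mu>s \<in> \<Delta>. (\<forall>\<mu> \<in> \<Delta>. g \<mu>s \<le> g \<mu>) \<longrightarrow> rank (Amu \<mu>s) = CARD('r) \<longrightarrow>
            (let Us = Amu \<mu>s ** matrix_inv (psd_sqrt (transpose (Amu \<mu>s) ** Amu \<mu>s))
             in Us \<in> feas \<and> (\<forall>U \<in> feas. f U \<le> f Us) \<and> transpose Us ** Us = mat 1))"
proof -
  define F where "F = (\<lambda>k U. 2 * trace (transpose (A k) ** U) + c k)"
  have feas_eq: "feas = {U. \<forall>y. norm (U *v y) \<le> norm y}" unfolding feas_def using feas_iff by auto
  have fF: "f = (\<lambda>U. Min ((\<lambda>k. F k U) ` UNIV))" unfolding f_def F_def by simp
  have fin: "finite ((\<lambda>k. F k U) ` UNIV)" for U by simp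
  have f_le: "f U \<le> F k U" for U k unfolding fF by (rule Min_le) auto
  have f_ex: "\<exists>k. f U = F k U" for U
  proof -
    have "f U \<in> (\<lambda>k. F k U) ` UNIV" unfolding fF by (rule Min_in) auto
    thus ?thesis by auto
  qed
  have lin: "(\<Sum>k\<in>UNIV. \<mu>$k * F k U) = 2 * trace (transpose (\<Sum>k\<in>UNIV. \<mu>$k *\<^sub>R A k) ** U) + (\<Sum>k\<in>UNIV. \<mu>$k * c k)"
    for \<mu> :: "real^'k" and U
  proof -
    have "(\<Sum>k\<in>UNIV. \<mu>$k * F k U) = (\<Sum>k\<in>UNIV. 2 * (\<mu>$k * trace (transpose (A k) ** U)) + \<mu>$k * c k)"
      unfolding F_def by (intro sum.cong refl) (simp add: algebra_simps)
    also have "\<dots> = 2 * (\<Sum>k\<in>UNIV. \<mu>$k * trace (transpose (A k) ** U)) + (\<Sum>k\<in>UNIV. \<mu>$k * c k)"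
      by (simp add: sum.distrib sum_distrib_left)
    also have "\<dots> = 2 * trace (transpose (\<Sum>k\<in>UNIV. \<mu>$k *\<^sub>R A k) ** U) + (\<Sum>k\<in>UNIV. \<mu>$k * c k)"
      by (simp add: tr_sum_left)
    finally show ?thesis .
  qed
  have gdef: "g \<mu> = 2 * nuclear_norm (\<Sum>k\<in>UNIV. \<mu>$k *\<^sub>R A k) + (\<Sum>k\<in>UNIV. \<mu>$k * c k)" for \<mu>
    unfolding g_def by simp
  have avg: "f U \<le> (\<Sum>k\<in>UNIV. \<mu>$k * F k U)" if \<mu>: "\<mu> \<in> \<Delta>" for U \<mu>
  proof -
    have \<mu>0: "\<forall>k. 0 \<le> \<mu>$k" and \<mu>1: "(\<Sum>k\<in>UNIV. \<mu>$k) = 1" using \<mu> unfolding \<Delta>_def by auto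
    have "f U = (\<Sum>k\<in>UNIV. \<mu>$k * f U)" using \<mu>1 by (simp add: sum_distrib_right[symmetric])
    also have "\<dots> \<le> (\<Sum>k\<in>UNIV. \<mu>$k * F k U)"
      by (intro sum_mono mult_left_mono f_le) (use \<mu>0 in auto)
    finally show ?thesis .
  qed
  have weak: "f U \<le> g \<mu>" if U: "U \<in> feas" and \<mu>: "\<mu> \<in> \<Delta>" for U \<mu>
  proof -
    have "f U \<le> (\<Sum>k\<in>UNIV. \<mu>$k * F k U)" by (rule avg[OF \<mu>])
    also have "\<dots> = 2 * trace (transpose (\<Sum>k\<in>UNIV. \<mu>$k *\<^sub>R A k) ** U) + (\<Sum>k\<in>UNIV. \<mu>$k * c k)"
      by (rule lin)
    also have "\<dots> \<le> g \<mu>" unfolding gdef using nuc_bound_gen[of U "\<Sum>k\<in>UNIV. \<mu>$k *\<^sub>R A k"] U feas_eq by simp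
    finally show ?thesis .
  qed
  have contf: "continuous_on feas f"
    unfolding fF by (rule cont_Min) (auto simp: F_def intro!: continuous_intros tr_cont)
  have cpt: "compact feas" using feas_compact feas_eq by simp
  have ne: "feas \<noteq> {}" unfolding feas_eq by (auto intro!: exI[of _ 0])
  obtain U0 where U0: "U0 \<in> feas" "\<forall>U\<in>feas. f U \<le> f U0"
    using continuous_attains_sup[OF cpt ne contf] by blast
  define v where "v = f U0"
  define FV where "FV = (\<lambda>U. \<chi> k. F k U)"
  define P where "P = {z::real^'k. \<exists>U\<in>feas. \<forall>k. z$k \<le> F k U}"
  define Q where "Q = {z::real^'k. \<forall>k. v < z$k}"
  have cvxfeas: "convex feas" using feas_convex feas_eq by simp
  have cP: "convex P" unfolding convex_def
  proof (intro ballI allI impI)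
    fix z1 z2 :: "real^'k" and u w :: real
    assume z1: "z1 \<in> P" and z2: "z2 \<in> P" and uw: "0 \<le> u" "0 \<le> w" "u + w = 1"
    obtain U1 where U1: "U1 \<in> feas" "\<forall>k. z1$k \<le> F k U1" using z1 unfolding P_def by auto
    obtain U2 where U2: "U2 \<in> feas" "\<forall>k. z2$k \<le> F k U2" using z2 unfolding P_def by auto
    have Uf: "u *\<^sub>R U1 + w *\<^sub>R U2 \<in> feas" using cvxfeas U1(1) U2(1) uw unfolding convex_def by blast
    have "(u *\<^sub>R z1 + w *\<^sub>R z2)$k \<le> F k (u *\<^sub>R U1 + w *\<^sub>R U2)" for k
    proof -
      have "(u *\<^sub>R z1 + w *\<^sub>R z2)$k = u * z1$k + w * z2$k" by simp
      also have "\<dots> \<le> u * F k U1 + w * F k U2"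
        using uw U1(2) U2(2) by (intro add_mono mult_left_mono) auto
      also have "\<dots> = F k (u *\<^sub>R U1 + w *\<^sub>R U2)"
      proof -
        have "c k = u * c k + w * c k" using uw by (simp add: distrib_right[symmetric])
        thus ?thesis unfolding F_def tr_lin_right by (simp add: algebra_simps)
      qed
      finally show ?thesis .
    qed
    thus "u *\<^sub>R z1 + w *\<^sub>R z2 \<in> P" unfolding P_def using Uf by blast
  qed
  have cQ: "convex Q" unfolding convex_def
  proof (intro ballI allI impI)
    fix z1 z2 :: "real^'k" and u w :: real
    assume z1: "z1 \<in> Q" and z2: "z2 \<in> Q" and uw: "0 \<le> u" "0 \<le> w" "u + w = 1"
    have "v < (u *\<^sub>R z1 + w *\<^sub>R z2)$k" for k
    proof -
      have a1: "v < z1$k" "v < z2$k" using z1 z2 unfolding Q_def by auto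
      have "u * v \<le> u * z1$k" "w * v \<le> w * z2$k" using a1 uw by (auto intro: mult_left_mono)
      moreover have "u * v < u * z1$k \<or> w * v < w * z2$k"
      proof (cases "u = 0")
        case True then have "w = 1" using uw by simp
        then show ?thesis using a1 by simp
      next
        case False then have "u > 0" using uw by simp
        then show ?thesis using a1 by simp
      qed
      moreover have "v = u * v + w * v" using uw by (simp add: distrib_right[symmetric])
      ultimately have "u * v \<le> u * z1$k" "w * v \<le> w * z2$k"
          "u * v < u * z1$k \<or> w * v < w * z2$k" "v = u * v + w * v" by blast+
      then show ?thesis by simp (elim disjE; linarith)
    qed
    thus "u *\<^sub>R z1 + w *\<^sub>R z2 \<in> Q" unfolding Q_def by blast
  qed
  have FVP: "FV U \<in> P" if "U \<in> feas" for U unfolding P_def FV_def using that by auto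
  have PQ: "P \<inter> Q = {}"
  proof (rule ccontr)
    assume "P \<inter> Q \<noteq> {}"
    then obtain z U where U: "U \<in> feas" "\<forall>k. z$k \<le> F k U" and zQ: "\<forall>k. v < z$k"
      unfolding P_def Q_def by blast
    obtain k where "f U = F k U" using f_ex by blast
    hence "v < f U" using U(2) zQ by (metis order_less_le_trans)
    thus False using U0(2) U(1) unfolding v_def by fastforce
  qed
  have Qne: "(\<chi> k. v + 1) \<in> Q" unfolding Q_def by simp
  obtain a b where ab: "a \<noteq> 0" "\<forall>z\<in>P. a \<bullet> z \<le> b" "\<forall>z\<in>Q. b \<le> a \<bullet> z"
    using separating_hyperplane_sets[OF cP cQ _ _ PQ] FVP[OF U0(1)] Qne by blast
  have anneg: "0 \<le> a$k" for k
  proof (rule ccontr)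
    assume "\<not> 0 \<le> a$k"
    hence ak: "a$k < 0" by simp
    define t where "t = (\<bar>b\<bar> + \<bar>a \<bullet> FV U0\<bar> + 1) / (- a$k)"
    have t0: "t \<ge> 0" unfolding t_def using ak by (intro divide_nonneg_pos) auto
    have "FV U0 - t *\<^sub>R axis k 1 \<in> P"
      unfolding P_def FV_def using U0(1) t0 by (intro CollectI bexI[of _ U0]) (auto simp: axis_def)
    hence "a \<bullet> (FV U0 - t *\<^sub>R axis k 1) \<le> b" using ab(2) by blast
    moreover have "a \<bullet> (FV U0 - t *\<^sub>R axis k 1) = a \<bullet> FV U0 - t * a$k"
      by (simp add: inner_diff_right inner_axis)
    moreover have "t * a$k = - (\<bar>b\<bar> + \<bar>a \<bullet> FV U0\<bar> + 1)" unfolding t_def using ak by simp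
    ultimately show False by linarith
  qed
  define s where "s = (\<Sum>k\<in>UNIV. a$k)"
  have spos: "s > 0"
  proof -
    obtain k where "a$k \<noteq> 0" using ab(1) by (auto simp: vec_eq_iff)
    hence "a$k > 0" using anneg[of k] by simp
    moreover have "a$k \<le> s" unfolding s_def by (rule member_le_sum) (auto intro: anneg)
    ultimately show ?thesis by simp
  qed
  have bvs: "b \<le> v * s"
  proof (rule ccontr)
    assume "\<not> b \<le> v * s"
    define e where "e = (b - v * s) / (2 * s)"
    have "(\<chi> k. v + e) \<in> Q" unfolding Q_def e_def using \<open>\<not> b \<le> v * s\<close> spos by simp
    hence "b \<le> a \<bullet> (\<chi> k. v + e)" using ab(3) by blast
    also have "a \<bullet> (\<chi> k. v + e) = (v + e) * s" unfolding s_def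
      by (simp add: inner_vec_def sum_distrib_left mult.commute)
    also have "(v + e) * s = v * s + (b - v * s) / 2" unfolding e_def using spos
      by (simp add: field_simps)
    finally have "b \<le> v * s + (b - v * s) / 2" .
    hence "2 * b \<le> 2 * (v * s) + (b - v * s)" by (simp add: field_simps)
    thus False using \<open>\<not> b \<le> v * s\<close> by (simp add: mult.commute)
  qed
  define \<mu>0 where "\<mu>0 = (1 / s) *\<^sub>R a"
  have \<mu>0D: "\<mu>0 \<in> \<Delta>" unfolding \<Delta>_def \<mu>0_def using spos anneg
    by (simp add: s_def sum_divide_distrib[symmetric])
  have \<mu>0F: "(\<Sum>k\<in>UNIV. \<mu>0$k * F k U) \<le> v" if U: "U \<in> feas" for U
  proof -
    have "(\<Sum>k\<in>UNIV. \<mu>0$k * F k U) = (a \<bullet> FV U) / s"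
      unfolding \<mu>0_def FV_def by (simp add: inner_vec_def sum_divide_distrib)
    also have "\<dots> \<le> b / s" using ab(2) FVP[OF U] spos by (simp add: divide_right_mono)
    also have "\<dots> \<le> v" using bvs spos by (simp add: divide_le_eq)
    finally show ?thesis .
  qed
  obtain Ua where Ua: "\<forall>y. norm (Ua *v y) \<le> norm y" "trace (transpose (\<Sum>k\<in>UNIV. \<mu>0$k *\<^sub>R A k) ** Ua) = nuclear_norm (\<Sum>k\<in>UNIV. \<mu>0$k *\<^sub>R A k)"
    using nuc_attain_gen by blast
  have g0: "g \<mu>0 \<le> f U0"
  proof -
    have "g \<mu>0 = (\<Sum>k\<in>UNIV. \<mu>0$k * F k Ua)" unfolding gdef lin Ua(2) ..
    also have "\<dots> \<le> v" using \<mu>0F Ua(1) feas_eq by simp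
    finally show ?thesis unfolding v_def .
  qed
  have part1: "\<exists>U0 \<in> feas. \<exists>\<mu>0 \<in> \<Delta>. (\<forall>U \<in> feas. f U \<le> f U0) \<and> (\<forall>\<mu> \<in> \<Delta>. g \<mu>0 \<le> g \<mu>) \<and> f U0 = g \<mu>0"
  proof (intro bexI conjI)
    show "\<forall>U \<in> feas. f U \<le> f U0" by (rule U0(2))
    show "\<forall>\<mu> \<in> \<Delta>. g \<mu>0 \<le> g \<mu>" using g0 weak[OF U0(1)] by (meson order_trans)
    show "f U0 = g \<mu>0" using g0 weak[OF U0(1) \<mu>0D] by simp
  qed (use U0(1) \<mu>0D in auto)
  have part2: "(let Us = Amu \<mu>s ** matrix_inv (psd_sqrt (transpose (Amu \<mu>s) ** Amu \<mu>s))
             in Us \<in> feas \<and> (\<forall>U \<in> feas. f U \<le> f Us) \<and> transpose Us ** Us = mat 1)"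
    if \<mu>s: "\<mu>s \<in> \<Delta>" and hmin: "\<forall>\<mu> \<in> \<Delta>. g \<mu>s \<le> g \<mu>" and hr: "rank (Amu \<mu>s) = CARD('r)" for \<mu>s
  proof -
    define M where "M = Amu \<mu>s"
    have Mdef: "M = (\<Sum>k\<in>UNIV. \<mu>s$k *\<^sub>R A k)" unfolding M_def Amu_def ..
    obtain B where B: "onb B" and eB: "\<forall>b\<in>B. (transpose M ** M) *v b = ((M *v b) \<bullet> (M *v b)) *\<^sub>R b"
      using gram_eig by blast
    have inj: "inj ((*v) M)" using hr full_rank_injective unfolding M_def by blast
    have nz: "\<forall>b\<in>B. M *v b \<noteq> 0"
    proof
      fix b assume b: "b \<in> B"
      have "b \<noteq> 0" using B b unfolding onb_def by auto
      moreover have "M *v (0::real^'r) = 0" by simp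
      ultimately show "M *v b \<noteq> 0" using inj by (metis injD)
    qed
    have Us: "M ** matrix_inv (psd_sqrt (transpose M ** M)) = gen B (ufun M)"
      by (rule fullrank_parts(1)[OF B eB nz])
    have gs: "g \<mu>s \<le> f U0" using hmin \<mu>0D g0 by (meson order_trans)
    have "f U0 \<le> (\<Sum>k\<in>UNIV. \<mu>s$k * F k U0)" by (rule avg[OF \<mu>s])
    also have "\<dots> = 2 * trace (transpose M ** U0) + (\<Sum>k\<in>UNIV. \<mu>s$k * c k)" unfolding Mdef by (rule lin)
    finally have "g \<mu>s \<le> 2 * trace (transpose M ** U0) + (\<Sum>k\<in>UNIV. \<mu>s$k * c k)" using gs by simp
    hence "nuclear_norm M \<le> trace (transpose M ** U0)" unfolding gdef Mdef by simp
    moreover have "trace (transpose M ** U0) \<le> nuclear_norm M" using nuc_bound_gen U0(1) feas_eq by auto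
    ultimately have tr: "trace (transpose M ** U0) = nuclear_norm M" by simp
    have U0eq: "U0 = gen B (ufun M)"
      using fullrank_parts(3)[OF B eB nz _ tr] U0(1) feas_eq by auto
    show ?thesis unfolding Let_def M_def[symmetric] Us
    proof (intro conjI)
      show "gen B (ufun M) \<in> feas" using U0eq U0(1) by simp
      show "\<forall>U \<in> feas. f U \<le> f (gen B (ufun M))" using U0eq U0(2) by simp
      show "transpose (gen B (ufun M)) ** gen B (ufun M) = mat 1" by (rule fullrank_parts(2)[OF B eB nz])
    qed
  qed
  show ?thesis using part1 part2 by blast
qed

end
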